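(* Let $\kappa\in\{0,1\}$ and let $\mathbb{M}_\kappa$ be the simply connected complete Riemannian surface of constant curvature $\kappa$. For parameters $l>0$ and $\varepsilon>0$ (with $l<\pi/2$ when $\kappa=1$), consider in $\mathbb{M}_\kappa$ a quadrilateral $x_0x_1zx_2$, with $z$ and $x_0$ on opposite sides of the geodesic through $x_1,x_2$, such that $d(x_0,x_1)=d(x_0,x_2)=2l$, $d(x_1,z)=d(x_2,z)=l$, and the midpoints $y_1$ of $x_0x_1$ and $y_2$ of $x_0x_2$ satisfy $d(y_1,y_2)=\varepsilon$. Then, for $\varepsilon$ small enough, the circumcenter of the triangle $x_0x_1x_2$ lies inside the triangle $y_1y_2z$.
   Context: The quadrilateral is symmetric with respect to the geodesic through $x_0$ and $z$ (the bisector of the angle at $x_0$); the side-lengths are the geodesic distances in $\mathbb{M}_\kappa$. *)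

theory Defs
  imports "HOL-Analysis.Analysis"
begin

text \<open>Model space M_kappa for kappa in {0,1}, realised inside real^3:
  kappa = 0: the Euclidean plane {x. x$3 = 0} with the Euclidean distance;
  kappa = 1: the unit sphere with the great-circle (angular) distance.\<close>

definition Mk :: "real \<Rightarrow> (real^3) set" where
  "Mk \<kappa> = (if \<kappa> = 0 then {x. x$3 = 0} else {x. norm x = 1})"

definition mdist :: "real \<Rightarrow> real^3 \<Rightarrow> real^3 \<Rightarrow> real" where
  "mdist \<kappa> x y = (if \<kappa> = 0 then dist x y else arccos (x \<bullet> y))"

text \<open>Geodesic midpoint of a and b (unique when mdist a b < pi).\<close>
definition is_midpoint :: "real \<Rightarrow> real^3 \<Rightarrow> real^3 \<Rightarrow> real^3 \<Rightarrow> bool" where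
  "is_midpoint \<kappa> a b m \<longleftrightarrow> m \<in> Mk \<kappa> \<and>
     mdist \<kappa> a m = mdist \<kappa> a b / 2 \<and> mdist \<kappa> m b = mdist \<kappa> a b / 2"

text \<open>Signed side of p with respect to the geodesic through a and b:
  plane: orientation determinant; sphere: sign of det[a,b,p], the great circle
  through a and b being the intersection of the sphere with span {a,b}.\<close>
definition side :: "real \<Rightarrow> real^3 \<Rightarrow> real^3 \<Rightarrow> real^3 \<Rightarrow> real" where
  "side \<kappa> a b p = (if \<kappa> = 0
     then (b$1 - a$1) * (p$2 - a$2) - (b$2 - a$2) * (p$1 - a$1)
     else a$1 * (b$2 * p$3 - b$3 * p$2) - a$2 * (b$1 * p$3 - b$3 * p$1)
          + a$3 * (b$1 * p$2 - b$2 * p$1))"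

definition opposite_sides :: "real \<Rightarrow> real^3 \<Rightarrow> real^3 \<Rightarrow> real^3 \<Rightarrow> real^3 \<Rightarrow> bool" where
  "opposite_sides \<kappa> a b p q \<longleftrightarrow> side \<kappa> a b p * side \<kappa> a b q < 0"

text \<open>Circumcenter: the point of M_kappa equidistant from the three vertices;
  on the sphere, the one of the two antipodal candidates at distance < pi/2.\<close>
definition is_circumcenter :: "real \<Rightarrow> real^3 \<Rightarrow> real^3 \<Rightarrow> real^3 \<Rightarrow> real^3 \<Rightarrow> bool" where
  "is_circumcenter \<kappa> a b c q \<longleftrightarrow> q \<in> Mk \<kappa> \<and>
     mdist \<kappa> q a = mdist \<kappa> q b \<and> mdist \<kappa> q b = mdist \<kappa> q c \<and>
     (\<kappa> = 1 \<longrightarrow> mdist \<kappa> q a < pi / 2)"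

text \<open>p lies in the (open) geodesic triangle ABC:
  plane: strict convex combination; sphere: strictly positive linear combination
  (the geodesic triangle is the positive cone over A,B,C intersected with the sphere).\<close>
definition in_triangle :: "real \<Rightarrow> real^3 \<Rightarrow> real^3 \<Rightarrow> real^3 \<Rightarrow> real^3 \<Rightarrow> bool" where
  "in_triangle \<kappa> p A B C \<longleftrightarrow> p \<in> Mk \<kappa> \<and>
     (\<exists>u v w. u > 0 \<and> v > 0 \<and> w > 0 \<and> (\<kappa> = 0 \<longrightarrow> u + v + w = 1) \<and>
        p = u *\<^sub>R A + v *\<^sub>R B + w *\<^sub>R C)"

end

theory Submission
  imports Defs
begin

lemma orth3:
  fixes r a b p :: "real^3"
  assumes "r \<bullet> a = 0" "r \<bullet> b = 0" "r \<bullet> p = 0" "side 1 a b p \<noteq> 0"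
  shows "r = 0"
proof -
  let ?D = "side 1 a b p"
  have e: "r$1*a$1 + r$2*a$2 + r$3*a$3 = 0" "r$1*b$1 + r$2*b$2 + r$3*b$3 = 0"
     "r$1*p$1 + r$2*p$2 + r$3*p$3 = 0"
    using assms(1-3) by (simp_all add: inner_vec_def sum_3 mult.commute)
  have "?D * r$1 = 0" "?D * r$2 = 0" "?D * r$3 = 0"
    unfolding side_def using e by (simp, algebra)+
  then show ?thesis using assms(4) by (simp add: vec_eq_iff forall_3)
qed

lemma orth2:
  fixes r a b :: "real^3"
  assumes "r \<bullet> a = 0" "r \<bullet> b = 0" "r$3 = 0" "a$1*b$2 - a$2*b$1 \<noteq> 0"
  shows "r = 0"
proof -
  have e: "r$1*a$1 + r$2*a$2 = 0" "r$1*b$1 + r$2*b$2 = 0"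
    using assms(1-3) by (simp_all add: inner_vec_def sum_3 mult.commute)
  have "(a$1*b$2 - a$2*b$1) * r$1 = 0" "(a$1*b$2 - a$2*b$1) * r$2 = 0"
    using e by algebra+
  then show ?thesis using assms by (simp add: vec_eq_iff forall_3)
qed

lemma mid_plane:
  fixes x y m :: "real^3"
  assumes "dist x m = d/2" "dist m y = d/2" "dist x y = d"
  shows "m = (1/2) *\<^sub>R (x + y)"
proof -
  have pl: "norm (u + v)^2 + norm (u - v)^2 = 2 * (norm u^2 + norm v^2)" for u v :: "real^3"
    unfolding power2_norm_eq_inner by (simp add: inner_diff_left inner_diff_right inner_add_left inner_add_right inner_commute)
  define u where "u = m - x"
  define v where "v = y - m"
  have "u + v = y - x" by (simp add: u_def v_def)
  then have n1: "norm (u + v) = d" using assms(3) by (simp add: dist_norm norm_minus_commute)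
  have n2: "norm u = d/2" using assms(1) by (simp add: u_def dist_norm norm_minus_commute)
  have n3: "norm v = d/2" using assms(2) by (simp add: v_def dist_norm norm_minus_commute)
  have e: "norm (u - v)^2 = 2 * (norm u^2 + norm v^2) - norm (u + v)^2"
    using pl[of u v] by linarith
  also have "\<dots> = 2 * ((d/2)^2 + (d/2)^2) - d^2" by (simp only: n1 n2 n3)
  also have "\<dots> = 0" by (simp add: power2_eq_square field_simps)
  finally have "norm (u - v)^2 = 0" .
  then have "u - v = 0" by (simp only: zero_less_power2 power_eq_0_iff norm_eq_zero)
  then show ?thesis unfolding u_def v_def by (simp add: vec_eq_iff algebra_simps) (metis add_divide_distrib nonzero_mult_div_cancel_right zero_neq_numeral)
qed

lemma mid_sphere:
  fixes x y m :: "real^3"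
  assumes "x \<bullet> x = 1" "y \<bullet> y = 1" "m \<bullet> m = 1" "x \<bullet> m = c" "m \<bullet> y = c" "x \<bullet> y = 2*c^2 - 1" "c > 0"
  shows "m = (1/(2*c)) *\<^sub>R (x + y)"
proof -
  have "(m - (1/(2*c)) *\<^sub>R (x + y)) \<bullet> (m - (1/(2*c)) *\<^sub>R (x + y))
     = m\<bullet>m - (1/c) * (x\<bullet>m + m\<bullet>y) + (1/(2*c))^2 * (x\<bullet>x + y\<bullet>y + 2*(x\<bullet>y))"
    by (simp add: inner_simps inner_commute algebra_simps power2_eq_square)
  also have "\<dots> = 0" using assms by (simp add: field_simps power2_eq_square)
  finally show ?thesis by simp
qed

lemma unit_inner: "x \<in> Mk 1 \<Longrightarrow> x \<bullet> x = 1"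
  by (simp add: Mk_def dot_square_norm)

lemma unit_bound: "x \<in> Mk 1 \<Longrightarrow> y \<in> Mk 1 \<Longrightarrow> \<bar>x \<bullet> y\<bar> \<le> 1"
  using Cauchy_Schwarz_ineq2[of x y] by (simp add: Mk_def)

lemma arccos_inner: "x \<in> Mk 1 \<Longrightarrow> y \<in> Mk 1 \<Longrightarrow> arccos (x \<bullet> y) = a \<Longrightarrow> x \<bullet> y = cos a"
proof -
  assume a: "x \<in> Mk 1" "y \<in> Mk 1" "arccos (x \<bullet> y) = a"
  have "cos (arccos (x \<bullet> y)) = x \<bullet> y" by (rule cos_arccos_abs[OF unit_bound[OF a(1,2)]])
  then show ?thesis using a(3) by simp
qed

lemma side1_lin: "side 1 a b (u *\<^sub>R p + v *\<^sub>R (a + b)) = u * side 1 a b p"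
  unfolding side_def by (simp add: algebra_simps)

lemma sphere_case:
  fixes l :: real
  assumes l0: "l > 0" and l1: "l < pi/2"
  shows "\<exists>\<epsilon>0 > 0. \<forall>\<epsilon>. 0 < \<epsilon> \<and> \<epsilon> < \<epsilon>0 \<longrightarrow>
    (\<forall>x0 x1 x2 z y1 y2 c.
       x0 \<in> Mk 1 \<and> x1 \<in> Mk 1 \<and> x2 \<in> Mk 1 \<and> z \<in> Mk 1 \<and>
       opposite_sides 1 x1 x2 z x0 \<and>
       mdist 1 x0 x1 = 2 * l \<and> mdist 1 x0 x2 = 2 * l \<and>
       mdist 1 x1 z = l \<and> mdist 1 x2 z = l \<and>
       is_midpoint 1 x0 x1 y1 \<and> is_midpoint 1 x0 x2 y2 \<and>
       mdist 1 y1 y2 = \<epsilon> \<and>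
       is_circumcenter 1 x0 x1 x2 c
       \<longrightarrow> in_triangle 1 c y1 y2 z)"
proof -
  define C where "C = cos (2*l)"
  define c1 where "c1 = cos l"
  have c1p: "c1 > 0" unfolding c1_def using l0 l1 by (intro cos_gt_zero_pi) auto
  have Cc: "C = 2*c1^2 - 1" unfolding C_def c1_def by (simp add: cos_double_cos)
  have "cos pi < cos (2*l)" using l0 l1 by (intro cos_monotone_0_pi) auto
  moreover have "cos (2*l) < cos 0" using l0 l1 by (intro cos_monotone_0_pi) auto
  ultimately have Cb: "-1 < C" "C < 1" unfolding C_def by auto
  have C2: "C^2 < 1" using Cb abs_square_less_1[of C] by auto
  define T0 where "T0 = max (2*C^2 - 1) (max (2*C - 1) (-1 - 2*C))"
  have T0: "T0 < 1" unfolding T0_def using Cb C2 by auto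
  define \<theta> where "\<theta> = max ((T0 + 1 + 2*C) / (4*c1^2)) 0"
  have "4*c1^2 > 0" using c1p by simp
  moreover have "T0 + 1 + 2*C < 4*c1^2" using T0 Cc by simp
  ultimately have "(T0 + 1 + 2*C) / (4*c1^2) < 1" by (simp add: pos_divide_less_eq)
  then have th1: "\<theta> < 1" unfolding \<theta>_def by simp
  have th0: "0 \<le> \<theta>" unfolding \<theta>_def by simp
  define \<epsilon>0 where "\<epsilon>0 = arccos \<theta>"
  have e0: "\<epsilon>0 > 0" unfolding \<epsilon>0_def using th0 th1 arccos_less_arccos[of \<theta> 1] by simp
  show ?thesis
  proof (intro exI[of _ \<epsilon>0] conjI allI impI)
    show "\<epsilon>0 > 0" by (rule e0)
    fix \<epsilon> x0 x1 x2 z y1 y2 c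
    assume eps: "0 < \<epsilon> \<and> \<epsilon> < \<epsilon>0"
    assume H: "x0 \<in> Mk 1 \<and> x1 \<in> Mk 1 \<and> x2 \<in> Mk 1 \<and> z \<in> Mk 1 \<and>
       opposite_sides 1 x1 x2 z x0 \<and>
       mdist 1 x0 x1 = 2 * l \<and> mdist 1 x0 x2 = 2 * l \<and>
       mdist 1 x1 z = l \<and> mdist 1 x2 z = l \<and>
       is_midpoint 1 x0 x1 y1 \<and> is_midpoint 1 x0 x2 y2 \<and>
       mdist 1 y1 y2 = \<epsilon> \<and>
       is_circumcenter 1 x0 x1 x2 c"
    have M: "x0 \<in> Mk 1" "x1 \<in> Mk 1" "x2 \<in> Mk 1" "z \<in> Mk 1" "y1 \<in> Mk 1" "y2 \<in> Mk 1" "c \<in> Mk 1"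
      using H by (auto simp: is_midpoint_def is_circumcenter_def)
    have opp: "side 1 x1 x2 z * side 1 x1 x2 x0 < 0" using H by (simp add: opposite_sides_def)
    have ar: "arccos (x0 \<bullet> x1) = 2*l" "arccos (x0 \<bullet> x2) = 2*l" "arccos (x1 \<bullet> z) = l"
      "arccos (x2 \<bullet> z) = l" "arccos (x0 \<bullet> y1) = l" "arccos (y1 \<bullet> x1) = l"
      "arccos (x0 \<bullet> y2) = l" "arccos (y2 \<bullet> x2) = l" "arccos (y1 \<bullet> y2) = \<epsilon>"
      "arccos (c \<bullet> x0) = arccos (c \<bullet> x1)" "arccos (c \<bullet> x1) = arccos (c \<bullet> x2)"
      "arccos (c \<bullet> x0) < pi/2"
      using H by (auto simp: is_midpoint_def is_circumcenter_def mdist_def)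
    have i01: "x0 \<bullet> x1 = C" using arccos_inner[OF M(1,2) ar(1)] C_def by simp
    have i02: "x0 \<bullet> x2 = C" using arccos_inner[OF M(1,3) ar(2)] C_def by simp
    have iz1: "x1 \<bullet> z = c1" using arccos_inner[OF M(2,4) ar(3)] c1_def by simp
    have iz2: "x2 \<bullet> z = c1" using arccos_inner[OF M(3,4) ar(4)] c1_def by simp
    have iy1a: "x0 \<bullet> y1 = c1" using arccos_inner[OF M(1,5) ar(5)] c1_def by simp
    have iy1b: "y1 \<bullet> x1 = c1" using arccos_inner[OF M(5,2) ar(6)] c1_def by simp
    have iy2a: "x0 \<bullet> y2 = c1" using arccos_inner[OF M(1,6) ar(7)] c1_def by simp
    have iy2b: "y2 \<bullet> x2 = c1" using arccos_inner[OF M(6,3) ar(8)] c1_def by simp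
    have u0: "x0 \<bullet> x0 = 1" "x1 \<bullet> x1 = 1" "x2 \<bullet> x2 = 1" "y1 \<bullet> y1 = 1" "y2 \<bullet> y2 = 1"
      using M unit_inner by auto
    have y1e: "y1 = (1/(2*c1)) *\<^sub>R (x0 + x1)"
      by (rule mid_sphere[OF u0(1,2,4) iy1a iy1b]) (use i01 Cc c1p in auto)
    have y2e: "y2 = (1/(2*c1)) *\<^sub>R (x0 + x2)"
      by (rule mid_sphere[OF u0(1,3,5) iy2a iy2b]) (use i02 Cc c1p in auto)
    define k where "k = c \<bullet> x0"
    have ck: "c \<bullet> x0 = k" "c \<bullet> x1 = k" "c \<bullet> x2 = k"
      using ar(10,11) arccos_eq_iff unit_bound[OF M(7,1)] unit_bound[OF M(7,2)] unit_bound[OF M(7,3)]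
      unfolding k_def by metis+
    have kp: "k > 0"
    proof (rule ccontr)
      assume "\<not> k > 0"
      then have "arccos 0 \<le> arccos k" using arccos_le_arccos[of k 0] unit_bound[OF M(7,1)] k_def by auto
      then show False using ar(12) k_def by simp
    qed
    define t where "t = x1 \<bullet> x2"
    define s where "s = y1 \<bullet> y2"
    have sb: "\<bar>s\<bar> \<le> 1" unfolding s_def by (rule unit_bound[OF M(5,6)])
    have "arccos s < arccos \<theta>" using eps ar(9) s_def \<epsilon>0_def by simp
    then have st: "\<theta> < s" using arccos_less_mono[of s \<theta>] sb th0 th1 by simp
    have "arccos 1 < arccos s" using eps ar(9) s_def by simp
    then have s1: "s < 1" using arccos_less_mono[of 1 s] sb by simp
    have "s = (1/(2*c1))^2 * ((x0 + x1) \<bullet> (x0 + x2))" unfolding s_def y1e y2e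
      by (simp add: power2_eq_square)
    also have "\<dots> = (1 + 2*C + t) / (4*c1^2)"
      using u0 i01 i02 unfolding t_def by (simp add: inner_add_left inner_add_right inner_commute power2_eq_square field_simps)
    finally have se: "s = (1 + 2*C + t) / (4*c1^2)" .
    have c14: "4*c1^2 > 0" using c1p by simp
    have te: "t = 4*c1^2 * s - 1 - 2*C" using se c14 by (simp add: field_simps)
    have "(T0 + 1 + 2*C) / (4*c1^2) < s" using st unfolding \<theta>_def by simp
    then have "T0 + 1 + 2*C < 4*c1^2 * s" using c14 by (simp add: pos_divide_less_eq mult.commute)
    then have tT: "T0 < t" using te by simp
    have t1: "t < 1" using te s1 c14 Cc by (simp add: mult_less_cancel_left_pos)
    have tA: "2*C^2 - 1 < t" "2*C - 1 < t" "-1 - 2*C < t" using tT unfolding T0_def by auto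
    define D where "D = side 1 x1 x2 x0"
    have D0: "D \<noteq> 0" using opp D_def by auto
    define Det2 where "Det2 = 1 + t - 2*C^2"
    have Dp: "Det2 > 0" using tA Det2_def by simp
    have sy: "x1 \<bullet> x0 = C" "x2 \<bullet> x0 = C" "x1 \<bullet> x2 = t" "x2 \<bullet> x1 = t" "z \<bullet> x1 = c1" "z \<bullet> x2 = c1"
      using i01 i02 iz1 iz2 t_def by (simp_all add: inner_commute)
    define a0 where "a0 = k*(1+t-2*C)/Det2"
    define a1 where "a1 = k*(1-C)/Det2"
    define \<zeta> where "\<zeta> = z \<bullet> x0"
    define b0 where "b0 = (\<zeta>*(1+t) - 2*C*c1)/Det2"
    define b1 where "b1 = (c1 - C*\<zeta>)/Det2"
    have ce: "c = a0 *\<^sub>R x0 + a1 *\<^sub>R (x1 + x2)"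
    proof -
      let ?r = "c - (a0 *\<^sub>R x0 + a1 *\<^sub>R (x1 + x2))"
      have "?r \<bullet> x1 = k - a0*C - a1*(1+t)" using ck u0 i01
        by (simp add: inner_diff_left inner_add_left sy)
      also have "\<dots> = 0" unfolding a0_def a1_def using Dp by (simp add: field_simps Det2_def power2_eq_square) 
      finally have r1: "?r \<bullet> x1 = 0" .
      have "?r \<bullet> x2 = k - a0*C - a1*(t+1)" using ck u0 i02
        by (simp add: inner_diff_left inner_add_left sy)
      also have "\<dots> = 0" unfolding a0_def a1_def using Dp by (simp add: field_simps Det2_def power2_eq_square) 
      finally have r2: "?r \<bullet> x2 = 0" .
      have "?r \<bullet> x0 = k - a0 - a1*(2*C)" using ck u0 i01 i02
        by (simp add: inner_diff_left inner_add_left sy)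
      also have "\<dots> = 0" unfolding a0_def a1_def using Dp by (simp add: field_simps Det2_def power2_eq_square) 
      finally have r0: "?r \<bullet> x0 = 0" .
      have "?r = 0" by (rule orth3[OF r1 r2 r0]) (use D0 D_def in simp)
      then show ?thesis by simp
    qed
    have ze: "z = b0 *\<^sub>R x0 + b1 *\<^sub>R (x1 + x2)"
    proof -
      let ?r = "z - (b0 *\<^sub>R x0 + b1 *\<^sub>R (x1 + x2))"
      have "?r \<bullet> x1 = c1 - b0*C - b1*(1+t)" using iz1 u0 i01
        by (simp add: inner_diff_left inner_add_left sy)
      also have "\<dots> = 0" unfolding b0_def b1_def using Dp by (simp add: field_simps Det2_def power2_eq_square) 
      finally have r1: "?r \<bullet> x1 = 0" .
      have "?r \<bullet> x2 = c1 - b0*C - b1*(t+1)" using iz2 u0 i02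
        by (simp add: inner_diff_left inner_add_left sy)
      also have "\<dots> = 0" unfolding b0_def b1_def using Dp by (simp add: field_simps Det2_def power2_eq_square) 
      finally have r2: "?r \<bullet> x2 = 0" .
      have "?r \<bullet> x0 = \<zeta> - b0 - b1*(2*C)" using \<zeta>_def u0 i01 i02
        by (simp add: inner_diff_left inner_add_left sy)
      also have "\<dots> = 0" unfolding b0_def b1_def using Dp by (simp add: field_simps Det2_def power2_eq_square) 
      finally have r0: "?r \<bullet> x0 = 0" .
      have "?r = 0" by (rule orth3[OF r1 r2 r0]) (use D0 D_def in simp)
      then show ?thesis by simp
    qed
    have "side 1 x1 x2 z = b0 * D" unfolding ze D_def by (rule side1_lin)
    then have "b0 * (D * D) < 0" using opp D_def by (simp add: mult.assoc)
    moreover have "D * D > 0" using D0 by (cases "D > 0") (auto simp: mult_neg_neg)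
    ultimately have b0n: "b0 < 0" by (simp add: mult_less_0_iff)
    define w where "w = (a1 - a0/2)/(b1 - b0/2)"
    define u where "u = c1*(a0 - w*b0)"
    have n1: "a1 - a0/2 = k*(1-t)/(2*Det2)" unfolding a0_def a1_def using Dp by (simp add: field_simps)
    have n2: "b1 - b0/2 = (2*c1*(1+C) - \<zeta>*(1+t+2*C))/(2*Det2)" unfolding b0_def b1_def using Dp
      by (simp add: field_simps)
    have "b0 * Det2 = \<zeta>*(1+t) - 2*C*c1" unfolding b0_def using Dp by simp
    moreover have "b0 * Det2 < 0" using b0n Dp by (simp add: mult_neg_pos)
    ultimately have z1: "\<zeta>*(1+t) < 2*C*c1" by simp
    have P: "1 + t > 0" and Q: "1 + t + 2*C > 0" using tA Cb by auto
    have "\<zeta>*(1+t)*(1+t+2*C) < 2*C*c1*(1+t+2*C)" using z1 Q by (simp add: mult_strict_right_mono)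
    also have "\<dots> \<le> 2*c1*(1+C)*(1+t)"
    proof -
      have "2*c1*(1+C)*(1+t) - 2*C*c1*(1+t+2*C) = 2*c1*Det2" unfolding Det2_def by (simp add: algebra_simps power2_eq_square)
      then show ?thesis using c1p Dp by (smt (verit) mult_pos_pos)
    qed
    finally have "(\<zeta>*(1+t+2*C))*(1+t) < (2*c1*(1+C))*(1+t)" by (simp add: algebra_simps)
    then have z2: "\<zeta>*(1+t+2*C) < 2*c1*(1+C)" using P by (simp add: mult_less_cancel_right_pos)
    have den: "b1 - b0/2 > 0" unfolding n2 using z2 Dp by simp
    have num: "a1 - a0/2 > 0" unfolding n1 using kp t1 Dp by simp
    have wp: "w > 0" unfolding w_def using den num by simp
    have a0p: "a0 > 0" unfolding a0_def using kp tA Dp by simp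
    have "w * b0 < 0" using wp b0n by (simp add: mult_pos_neg)
    then have up: "u > 0" unfolding u_def using c1p a0p by simp
    have E1: "u/c1 + w*b0 = a0" using c1p unfolding u_def by (simp add: field_simps)
    have "w * (b1 - b0/2) = a1 - a0/2" unfolding w_def using den by simp
    moreover have "u/(2*c1) = (a0 - w*b0)/2" using c1p unfolding u_def by simp
    ultimately have E2: "u/(2*c1) + w*b1 = a1" by (simp add: algebra_simps)
    have "u *\<^sub>R y1 + u *\<^sub>R y2 + w *\<^sub>R z = (u/c1 + w*b0) *\<^sub>R x0 + (u/(2*c1) + w*b1) *\<^sub>R (x1+x2)"
      unfolding y1e y2e ze using c1p by (simp add: vec_eq_iff field_simps)
    then have "c = u *\<^sub>R y1 + u *\<^sub>R y2 + w *\<^sub>R z" unfolding E1 E2 ce by simp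
    then show "in_triangle 1 c y1 y2 z" unfolding in_triangle_def using M(7) up wp by auto
  qed
qed

lemma dist_sq: "dist x y ^ 2 = (x - y) \<bullet> (x - y)" for x y :: "real^3"
  by (simp add: dist_norm power2_norm_eq_inner)

lemma plane_case:
  fixes l :: real
  assumes l0: "l > 0"
  shows "\<exists>\<epsilon>0 > 0. \<forall>\<epsilon>. 0 < \<epsilon> \<and> \<epsilon> < \<epsilon>0 \<longrightarrow>
    (\<forall>x0 x1 x2 z y1 y2 c.
       x0 \<in> Mk 0 \<and> x1 \<in> Mk 0 \<and> x2 \<in> Mk 0 \<and> z \<in> Mk 0 \<and>
       opposite_sides 0 x1 x2 z x0 \<and>
       mdist 0 x0 x1 = 2 * l \<and> mdist 0 x0 x2 = 2 * l \<and>
       mdist 0 x1 z = l \<and> mdist 0 x2 z = l \<and>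
       is_midpoint 0 x0 x1 y1 \<and> is_midpoint 0 x0 x2 y2 \<and>
       mdist 0 y1 y2 = \<epsilon> \<and>
       is_circumcenter 0 x0 x1 x2 c
       \<longrightarrow> in_triangle 0 c y1 y2 z)"
proof (intro exI[of _ l] conjI allI impI)
  show "l > 0" by (rule l0)
  fix \<epsilon> x0 x1 x2 z y1 y2 c
  assume eps: "0 < \<epsilon> \<and> \<epsilon> < l"
  assume H: "x0 \<in> Mk 0 \<and> x1 \<in> Mk 0 \<and> x2 \<in> Mk 0 \<and> z \<in> Mk 0 \<and>
       opposite_sides 0 x1 x2 z x0 \<and>
       mdist 0 x0 x1 = 2 * l \<and> mdist 0 x0 x2 = 2 * l \<and>
       mdist 0 x1 z = l \<and> mdist 0 x2 z = l \<and>
       is_midpoint 0 x0 x1 y1 \<and> is_midpoint 0 x0 x2 y2 \<and>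
       mdist 0 y1 y2 = \<epsilon> \<and>
       is_circumcenter 0 x0 x1 x2 c"
  have M3: "x0$3 = 0" "x1$3 = 0" "x2$3 = 0" "z$3 = 0" "c$3 = 0"
    using H by (auto simp: Mk_def is_circumcenter_def)
  have cM: "c \<in> Mk 0" using H by (simp add: is_circumcenter_def)
  have opp: "side 0 x1 x2 z * side 0 x1 x2 x0 < 0" using H by (simp add: opposite_sides_def)
  have ds: "dist x0 x1 = 2*l" "dist x0 x2 = 2*l" "dist x1 z = l" "dist x2 z = l"
    "dist x0 y1 = 2*l/2" "dist y1 x1 = 2*l/2" "dist x0 y2 = 2*l/2" "dist y2 x2 = 2*l/2"
    "dist y1 y2 = \<epsilon>" "dist c x0 = dist c x1" "dist c x1 = dist c x2"
    using H by (auto simp: is_midpoint_def is_circumcenter_def mdist_def)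
  have y1e: "y1 = (1/2) *\<^sub>R (x0 + x1)" by (rule mid_plane[OF ds(5,6,1)])
  have y2e: "y2 = (1/2) *\<^sub>R (x0 + x2)" by (rule mid_plane[OF ds(7,8,2)])
  define a where "a = x1 - x0"
  define b where "b = x2 - x0"
  define q where "q = c - x0"
  define r where "r = z - x0"
  define p where "p = a \<bullet> b"
  have aa: "a \<bullet> a = 4*l^2" using dist_sq[of x0 x1] ds(1) unfolding a_def
    by (simp add: inner_diff_left inner_diff_right inner_commute power2_eq_square)
  have bb: "b \<bullet> b = 4*l^2" using dist_sq[of x0 x2] ds(2) unfolding b_def
    by (simp add: inner_diff_left inner_diff_right inner_commute power2_eq_square)
  have "\<epsilon>^2 = (y1 - y2) \<bullet> (y1 - y2)" using dist_sq[of y1 y2] ds(9) by simp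
  also have "y1 - y2 = (1/2) *\<^sub>R (a - b)" unfolding y1e y2e a_def b_def by (simp add: vec_eq_iff field_simps)
  finally have "\<epsilon>^2 = (1/4) * (a\<bullet>a - 2*p + b\<bullet>b)" unfolding p_def
    by (simp add: inner_diff_left inner_diff_right inner_commute)
  then have pe: "p = 4*l^2 - 2*\<epsilon>^2" using aa bb by simp
  define S where "S = 4*l^2 + p"
  have ee: "\<epsilon>*\<epsilon> < l*l" using eps by (intro mult_strict_mono) auto
  have ll: "l*l > 0" "\<epsilon>*\<epsilon> > 0" using l0 eps by auto
  have Sp: "S > 4*l^2" "S < 8*l^2" unfolding S_def pe using ee ll
    by (auto simp: power2_eq_square)
  have S0: "S > 0" using Sp(1) l0 by (smt (verit) zero_less_power)
  have ipq: "(u - v) \<bullet> (u - v) = u\<bullet>u - 2*(u\<bullet>v) + v\<bullet>v" for u v :: "real^3"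
    by (simp add: inner_diff_left inner_diff_right inner_commute)
  have "q \<bullet> q = (q - a) \<bullet> (q - a)"
  proof -
    have "dist c x0 ^2 = dist c x1 ^2" using ds(10) by simp
    moreover have "c - x1 = q - a" unfolding q_def a_def by simp
    ultimately show ?thesis unfolding dist_sq q_def by simp
  qed
  then have qa: "q \<bullet> a = 2*l^2" using aa ipq[of q a] by simp
  have "q \<bullet> q = (q - b) \<bullet> (q - b)"
  proof -
    have "dist c x0 ^2 = dist c x2 ^2" using ds(10,11) by simp
    moreover have "c - x2 = q - b" unfolding q_def b_def by simp
    ultimately show ?thesis unfolding dist_sq q_def by simp
  qed
  then have qb: "q \<bullet> b = 2*l^2" using bb ipq[of q b] by simp
  define \<zeta> where "\<zeta> = r \<bullet> a"
  have "(a - r) \<bullet> (a - r) = (b - r) \<bullet> (b - r)"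
  proof -
    have "dist x1 z ^2 = dist x2 z ^2" using ds(3,4) by simp
    moreover have "x1 - z = a - r" "x2 - z = b - r" unfolding r_def a_def b_def by simp_all
    ultimately show ?thesis unfolding dist_sq by simp
  qed
  then have rb: "r \<bullet> b = \<zeta>" using aa bb ipq[of a r] ipq[of b r] unfolding \<zeta>_def by (simp add: inner_commute)
  define D where "D = a$1*b$2 - a$2*b$1"
  have sD: "side 0 x1 x2 x0 = D" unfolding side_def D_def a_def b_def by (simp add: algebra_simps)
  have D0: "D \<noteq> 0" using opp sD by auto
  define lam where "lam = 2*l^2/S"
  define mu where "mu = \<zeta>/S"
  have pba: "b \<bullet> a = p" unfolding p_def by (simp add: inner_commute)
  have ce: "c = x0 + lam *\<^sub>R (a + b)"
  proof -
    let ?r = "q - lam *\<^sub>R (a + b)"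
    have "?r \<bullet> a = 2*l^2 - lam * S" using qa aa pba unfolding S_def by (simp add: inner_diff_left inner_add_left algebra_simps)
    then have r1: "?r \<bullet> a = 0" unfolding lam_def using S0 by simp
    have "?r \<bullet> b = 2*l^2 - lam * S" using qb bb p_def unfolding S_def by (simp add: inner_diff_left inner_add_left algebra_simps)
    then have r2: "?r \<bullet> b = 0" unfolding lam_def using S0 by simp
    have r3: "?r$3 = 0" unfolding q_def a_def b_def using M3 by simp
    have "?r = 0" by (rule orth2[OF r1 r2 r3]) (use D0 D_def in simp)
    then show ?thesis unfolding q_def by (simp add: algebra_simps)
  qed
  have ze: "z = x0 + mu *\<^sub>R (a + b)"
  proof -
    let ?r = "r - mu *\<^sub>R (a + b)"
    have "?r \<bullet> a = \<zeta> - mu * S" using \<zeta>_def aa pba unfolding S_def by (simp add: inner_diff_left inner_add_left algebra_simps)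
    then have r1: "?r \<bullet> a = 0" unfolding mu_def using S0 by simp
    have "?r \<bullet> b = \<zeta> - mu * S" using rb bb p_def unfolding S_def by (simp add: inner_diff_left inner_add_left algebra_simps)
    then have r2: "?r \<bullet> b = 0" unfolding mu_def using S0 by simp
    have r3: "?r$3 = 0" unfolding r_def a_def b_def using M3 by simp
    have "?r = 0" by (rule orth2[OF r1 r2 r3]) (use D0 D_def in simp)
    then show ?thesis unfolding r_def by (simp add: algebra_simps)
  qed
  have sz: "side 0 x1 x2 z = D * (1 - 2*mu)" unfolding ze side_def D_def a_def b_def
    by (simp add: algebra_simps)
  have "(D * (1 - 2*mu)) * D < 0" using opp unfolding sz sD .
  then have "D * D * (1 - 2*mu) < 0" by (simp add: algebra_simps)
  moreover have "D * D > 0" using D0 by (cases "D > 0") (auto simp: mult_neg_neg)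
  ultimately have mu: "mu > 1/2" by (simp add: mult_less_0_iff)
  have l2: "l^2 > 0" using l0 by simp
  have lam1: "lam > 1/4" unfolding lam_def using Sp S0 by (simp add: pos_less_divide_eq)
  have lam2: "lam < 1/2" unfolding lam_def using Sp S0 by (simp add: pos_divide_less_eq)
  define w where "w = (lam - 1/4)/(mu - 1/4)"
  define u where "u = (1 - w)/2"
  have wp: "w > 0" unfolding w_def using lam1 mu by simp
  have w1: "w < 1" unfolding w_def using lam1 lam2 mu by simp
  have up: "u > 0" unfolding u_def using w1 by simp
  have E: "u/2 + w*mu = lam"
  proof -
    have "w * (mu - 1/4) = lam - 1/4" unfolding w_def using mu by simp
    then show ?thesis unfolding u_def by (simp add: field_simps)
  qed
  have E2: "2*u + w = 1" unfolding u_def by (simp add: field_simps)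
  have "u *\<^sub>R y1 + u *\<^sub>R y2 + w *\<^sub>R z = (2*u + w) *\<^sub>R x0 + (u/2 + w*mu) *\<^sub>R (a + b)"
    unfolding y1e y2e ze a_def b_def by (simp add: vec_eq_iff algebra_simps)
  then have "c = u *\<^sub>R y1 + u *\<^sub>R y2 + w *\<^sub>R z" unfolding E E2 ce by simp
  then show "in_triangle 0 c y1 y2 z" unfolding in_triangle_def using cM up wp E2
    by (intro conjI exI[of _ u] exI[of _ w]) auto
qed

theorem lemma13:
  fixes \<kappa> l :: real
  assumes "\<kappa> \<in> {0, 1}" and "l > 0" and "\<kappa> = 1 \<longrightarrow> l < pi / 2"
  shows "\<exists>\<epsilon>0 > 0. \<forall>\<epsilon>. 0 < \<epsilon> \<and> \<epsilon> < \<epsilon>0 \<longrightarrow>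
    (\<forall>x0 x1 x2 z y1 y2 c.
       x0 \<in> Mk \<kappa> \<and> x1 \<in> Mk \<kappa> \<and> x2 \<in> Mk \<kappa> \<and> z \<in> Mk \<kappa> \<and>
       opposite_sides \<kappa> x1 x2 z x0 \<and>
       mdist \<kappa> x0 x1 = 2 * l \<and> mdist \<kappa> x0 x2 = 2 * l \<and>
       mdist \<kappa> x1 z = l \<and> mdist \<kappa> x2 z = l \<and>
       is_midpoint \<kappa> x0 x1 y1 \<and> is_midpoint \<kappa> x0 x2 y2 \<and>
       mdist \<kappa> y1 y2 = \<epsilon> \<and>
       is_circumcenter \<kappa> x0 x1 x2 c
       \<longrightarrow> in_triangle \<kappa> c y1 y2 z)"
  using assms plane_case[OF assms(2)] sphere_case[OF assms(2)] by auto

end
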